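(* Let $\mathcal X_i=\Delta^{d_i}$ for all $i$. Let $G$ be one of the following: (1) the $\alpha$-divergence $G(\pi_i,\sigma_i)=\frac1{\alpha(1-\alpha)}(1-\sum_j\pi_{ij}^\alpha\sigma_{ij}^{1-\alpha})$ with $\alpha\in(0,1)$; (2) the Rényi divergence $G(\pi_i,\sigma_i)=\frac1{\alpha-1}\ln(\sum_j\pi_{ij}^\alpha\sigma_{ij}^{1-\alpha})$ with $\alpha\in(0,1)$; (3) the reverse KL divergence $G(\pi_i,\sigma_i)=\sum_j\sigma_{ij}\ln(\sigma_{ij}/\pi_{ij})$. Let $\mu>0$ and let $\sigma$ be in the interior of $\mathcal X$. If $\pi^{\mu,\sigma}=\sigma$, then $\sigma$ is a Nash equilibrium of the original (unperturbed) game.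
   Context: Game. Let $N\ge1$. $\Delta^d=\{p\in[0,1]^d:\sum_jp_j=1\}$ denotes the probability simplex, and $\mathcal X=\prod_i\mathcal X_i$. Each $v_i:\mathcal X\to\mathbb R$ is differentiable, with block gradient $\nabla_{\pi_i}v_i$. The game is monotone: $\sum_i\langle\nabla_{\pi_i}v_i(\pi)-\nabla_{\pi_i}v_i(\pi'),\pi_i-\pi_i'\rangle\le0$ for all $\pi,\pi'$. A Nash equilibrium is a $\pi^*$ with $v_i(\pi^* )\ge v_i(\pi_i,\pi^*_{-i})$ for all $i$ and $\pi_i\in\mathcal X_i$. Perturbed equilibrium. For $\mu>0$ and $\sigma\in\mathcal X$, $\pi^{\mu,\sigma}$ is the profile with $\pi_i^{\mu,\sigma}\in\arg\max_{\pi_i\in\mathcal X_i}\{v_i(\pi_i,\pi^{\mu,\sigma}_{-i})-\mu G(\pi_i,\sigma_i)\}$ for all $i$. *)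

theory Defs
  imports "HOL-Analysis.Analysis"
begin

text \<open>Players form a finite type 'n; player i's pure actions are a finite set
  A i of the finite type 'm (so d_i = card (A i)). A mixed strategy of player i
  is a vector in real^'m supported on A i; a profile is a real^'m^'n.\<close>

definition prob_simplex :: "'m::finite set \<Rightarrow> (real^'m) set" where
  "prob_simplex A = {p. (\<forall>j. 0 \<le> p$j) \<and> (\<forall>j. j \<notin> A \<longrightarrow> p$j = 0) \<and> (\<Sum>j\<in>A. p$j) = 1}"

definition profiles :: "('n::finite \<Rightarrow> 'm::finite set) \<Rightarrow> (real^'m^'n) set" where
  "profiles A = {\<pi>. \<forall>i. \<pi>$i \<in> prob_simplex (A i)}"

definition upd :: "real^'m^'n \<Rightarrow> 'n \<Rightarrow> real^'m \<Rightarrow> real^'m^'n" where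
  "upd \<pi> i p = (\<chi> k. if k = i then p else \<pi>$k)"

definition block_grad :: "('n::finite \<Rightarrow> real^'m^'n \<Rightarrow> real) \<Rightarrow> 'n \<Rightarrow> real^'m^'n \<Rightarrow> real^'m::finite" where
  "block_grad v i \<pi> = (\<chi> j. frechet_derivative (\<lambda>p. v i (upd \<pi> i p)) (at (\<pi>$i)) (axis j 1))"

definition monotone_game :: "('n::finite \<Rightarrow> 'm::finite set) \<Rightarrow> ('n \<Rightarrow> real^'m^'n \<Rightarrow> real) \<Rightarrow> bool" where
  "monotone_game A v \<longleftrightarrow> (\<forall>\<pi>\<in>profiles A. \<forall>\<pi>'\<in>profiles A.
      (\<Sum>i\<in>UNIV. (block_grad v i \<pi> - block_grad v i \<pi>') \<bullet> (\<pi>$i - \<pi>'$i)) \<le> 0)"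

definition nash_eq :: "('n::finite \<Rightarrow> 'm::finite set) \<Rightarrow> ('n \<Rightarrow> real^'m^'n \<Rightarrow> real) \<Rightarrow> real^'m^'n \<Rightarrow> bool" where
  "nash_eq A v \<pi> \<longleftrightarrow> \<pi> \<in> profiles A \<and> (\<forall>i. \<forall>p\<in>prob_simplex (A i). v i (upd \<pi> i p) \<le> v i \<pi>)"

definition alpha_div :: "real \<Rightarrow> 'm::finite set \<Rightarrow> real^'m \<Rightarrow> real^'m \<Rightarrow> ereal" where
  "alpha_div \<alpha> A p s = ereal (1 / (\<alpha> * (1 - \<alpha>)) * (1 - (\<Sum>j\<in>A. (p$j) powr \<alpha> * (s$j) powr (1 - \<alpha>))))"

definition renyi_div :: "real \<Rightarrow> 'm::finite set \<Rightarrow> real^'m \<Rightarrow> real^'m \<Rightarrow> ereal" where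
  "renyi_div \<alpha> A p s = (let S = (\<Sum>j\<in>A. (p$j) powr \<alpha> * (s$j) powr (1 - \<alpha>)) in
     if S = 0 then \<infinity> else ereal (1 / (\<alpha> - 1) * ln S))"

definition rev_kl :: "'m::finite set \<Rightarrow> real^'m \<Rightarrow> real^'m \<Rightarrow> ereal" where
  "rev_kl A p s = (if \<forall>j\<in>A. 0 < s$j \<longrightarrow> 0 < p$j
     then ereal (\<Sum>j\<in>A. s$j * ln (s$j / p$j)) else \<infinity>)"

text \<open>pi is a perturbed equilibrium pi^{mu,sigma}: each pi_i maximizes
  v_i(., pi_{-i}) - mu G(., sigma_i) over player i's prob_simplex.\<close>
definition perturbed_eq :: "('n::finite \<Rightarrow> 'm::finite set) \<Rightarrow> ('n \<Rightarrow> real^'m^'n \<Rightarrow> real)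
    \<Rightarrow> ('m set \<Rightarrow> real^'m \<Rightarrow> real^'m \<Rightarrow> ereal) \<Rightarrow> real \<Rightarrow> real^'m^'n \<Rightarrow> real^'m^'n \<Rightarrow> bool" where
  "perturbed_eq A v G \<mu> \<sigma> \<pi> \<longleftrightarrow> \<pi> \<in> profiles A \<and>
     (\<forall>i. \<forall>p\<in>prob_simplex (A i).
        ereal (v i (upd \<pi> i p)) - ereal \<mu> * G (A i) p (\<sigma>$i)
          \<le> ereal (v i \<pi>) - ereal \<mu> * G (A i) (\<pi>$i) (\<sigma>$i))"

end

theory Submission
  imports Defs
begin


definition upd0 :: "'n \<Rightarrow> real^'m \<Rightarrow> real^'m^'n" where
  "upd0 i e = (\<chi> k. if k = i then e else 0)"

lemma linear_upd0: "linear (upd0 i)"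
  by (rule linearI) (auto simp: upd0_def vec_eq_iff)

lemma bl_upd0: "bounded_linear (upd0 i :: real^'m::finite \<Rightarrow> real^'m^'n::finite)"
  using linear_upd0 linear_conv_bounded_linear by blast

lemma upd_eq: "upd \<pi> i p = (\<chi> k. if k = i then 0 else \<pi>$k) + upd0 i p"
  by (auto simp: upd_def upd0_def vec_eq_iff)

lemma upd_self: "upd \<pi> i (\<pi>$i) = \<pi>"
  by (auto simp: upd_def vec_eq_iff)

lemma bg_inner:
  fixes v :: "'n::finite \<Rightarrow> real^'m::finite^'n \<Rightarrow> real"
  assumes "v i differentiable (at \<pi>)"
  shows "block_grad v i \<pi> \<bullet> e = frechet_derivative (v i) (at \<pi>) (upd0 i e)"
proof -
  let ?L = "frechet_derivative (v i) (at \<pi>)"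
  have L: "(v i has_derivative ?L) (at \<pi>)" using assms frechet_derivative_works by blast
  have U: "((\<lambda>p. upd \<pi> i p) has_derivative upd0 i) (at (\<pi>$i))"
    unfolding upd_eq
    using bounded_linear_imp_has_derivative[OF bl_upd0, of i "at (\<pi>$i)"]
    by (auto intro!: derivative_eq_intros)
  have "((\<lambda>p. v i (upd \<pi> i p)) has_derivative (\<lambda>p. ?L (upd0 i p))) (at (\<pi>$i))"
    using diff_chain_at[OF U, of "v i" ?L] L upd_self[of \<pi> i] by (simp add: o_def)
  hence F: "frechet_derivative (\<lambda>p. v i (upd \<pi> i p)) (at (\<pi>$i)) = (\<lambda>p. ?L (upd0 i p))"
    by (metis frechet_derivative_at)
  have lin: "linear (\<lambda>p. ?L (upd0 i p))"
    using L has_derivative_linear linear_upd0 linear_compose[of "upd0 i" ?L]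
    by (auto simp: o_def)
  have "?L (upd0 i e) = ?L (upd0 i (\<Sum>j\<in>UNIV. (e$j) *s axis j 1))"
    by (simp add: basis_expansion)
  also have "\<dots> = (\<Sum>j\<in>UNIV. e$j * ?L (upd0 i (axis j 1)))"
  proof -
    define M where "M = (\<lambda>p. ?L (upd0 i p))"
    have "M (\<Sum>j\<in>UNIV. (e$j) *s axis j 1) = (\<Sum>j\<in>UNIV. M ((e$j) *s axis j 1))"
      using linear_sum[OF lin[folded M_def]] by (simp add: o_def)
    also have "\<dots> = (\<Sum>j\<in>UNIV. e$j * M (axis j 1))"
      using linear_scale[OF lin[folded M_def]] by (simp add: scalar_mult_eq_scaleR)
    finally show ?thesis by (simp add: M_def)
  qed
  also have "\<dots> = block_grad v i \<pi> \<bullet> e"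
    by (simp add: block_grad_def F inner_vec_def mult.commute)
  finally show ?thesis by simp
qed



lemma h_facts:
  fixes s e :: "real^'m::finite"
  assumes a: "0 < \<alpha>" "\<alpha> < 1" and spos: "\<And>j. j \<in> A \<Longrightarrow> 0 < s$j"
    and s1: "(\<Sum>j\<in>A. s$j) = 1" and e0: "(\<Sum>j\<in>A. e$j) = 0"
  shows "((\<lambda>t. \<Sum>j\<in>A. (s$j + t*e$j) powr \<alpha> * (s$j) powr (1 - \<alpha>)) has_real_derivative 0) (at 0)"
    and "(\<Sum>j\<in>A. (s$j + 0*e$j) powr \<alpha> * (s$j) powr (1 - \<alpha>)) = 1"
proof -
  have "((\<lambda>t. \<Sum>j\<in>A. (s$j + t*e$j) powr \<alpha> * (s$j) powr (1 - \<alpha>)) has_real_derivative (\<Sum>j\<in>A. \<alpha> * (s$j) powr (\<alpha> - 1) * e$j * (s$j) powr (1 - \<alpha>))) (at 0)"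
    using a by (auto intro!: derivative_eq_intros sum.cong simp: spos)
  moreover have "(\<Sum>j\<in>A. \<alpha> * (s$j) powr (\<alpha> - 1) * e$j * (s$j) powr (1 - \<alpha>)) = (\<Sum>j\<in>A. \<alpha> * e$j)"
  proof (rule sum.cong)
    fix j assume "j \<in> A"
    hence "(s$j) powr (\<alpha> - 1) * (s$j) powr (1 - \<alpha>) = 1" using spos[of j] by (simp add: powr_add[symmetric])
    thus "\<alpha> * (s$j) powr (\<alpha> - 1) * e$j * (s$j) powr (1 - \<alpha>) = \<alpha> * e$j"
      by (metis mult.commute mult.left_commute mult_1_right)
  qed simp
  moreover have "(\<Sum>j\<in>A. \<alpha> * e$j) = 0" using e0 by (simp add: sum_distrib_left[symmetric])
  ultimately show "((\<lambda>t. \<Sum>j\<in>A. (s$j + t*e$j) powr \<alpha> * (s$j) powr (1 - \<alpha>)) has_real_derivative 0) (at 0)"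
    by simp
  have "(\<Sum>j\<in>A. (s$j + 0*e$j) powr \<alpha> * (s$j) powr (1 - \<alpha>)) = (\<Sum>j\<in>A. s$j)"
    by (rule sum.cong) (auto simp: spos powr_add[symmetric] less_imp_le)
  thus "(\<Sum>j\<in>A. (s$j + 0*e$j) powr \<alpha> * (s$j) powr (1 - \<alpha>)) = 1" using s1 by simp
qed

lemma alpha_case:
  fixes s e :: "real^'m::finite"
  assumes a: "0 < \<alpha>" "\<alpha> < 1" and spos: "\<And>j. j \<in> A \<Longrightarrow> 0 < s$j"
    and s1: "(\<Sum>j\<in>A. s$j) = 1" and e0: "(\<Sum>j\<in>A. e$j) = 0"
  shows "\<exists>\<phi>. (\<phi> has_real_derivative 0) (at 0) \<and> \<phi> 0 = 0 \<and>
     (\<forall>t. (\<forall>j\<in>A. 0 < s$j + t*e$j) \<longrightarrow> alpha_div \<alpha> A (s + t *\<^sub>R e) s = ereal (\<phi> t))"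
proof -
  define h where "h t = (\<Sum>j\<in>A. (s$j + t*e$j) powr \<alpha> * (s$j) powr (1 - \<alpha>))" for t
  note hf = h_facts[OF assms, folded h_def]
  define \<phi> where "\<phi> t = 1 / (\<alpha> * (1 - \<alpha>)) * (1 - h t)" for t
  have "(\<phi> has_real_derivative 0) (at 0)"
    unfolding \<phi>_def using hf a by (auto intro!: derivative_eq_intros)
  moreover have "\<phi> 0 = 0" using hf(2) by (simp add: \<phi>_def)
  moreover have "alpha_div \<alpha> A (s + t *\<^sub>R e) s = ereal (\<phi> t)" for t
    by (simp add: alpha_div_def \<phi>_def h_def)
  ultimately show ?thesis by (intro exI[of _ \<phi>]) auto
qed

lemma renyi_case:
  fixes s e :: "real^'m::finite"
  assumes a: "0 < \<alpha>" "\<alpha> < 1" and spos: "\<And>j. j \<in> A \<Longrightarrow> 0 < s$j"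
    and s1: "(\<Sum>j\<in>A. s$j) = 1" and e0: "(\<Sum>j\<in>A. e$j) = 0"
  shows "\<exists>\<phi>. (\<phi> has_real_derivative 0) (at 0) \<and> \<phi> 0 = 0 \<and>
     (\<forall>t. (\<forall>j\<in>A. 0 < s$j + t*e$j) \<longrightarrow> renyi_div \<alpha> A (s + t *\<^sub>R e) s = ereal (\<phi> t))"
proof -
  define h where "h t = (\<Sum>j\<in>A. (s$j + t*e$j) powr \<alpha> * (s$j) powr (1 - \<alpha>))" for t
  note hf = h_facts[OF assms, folded h_def]
  define \<phi> where "\<phi> t = 1 / (\<alpha> - 1) * ln (h t)" for t
  have "(\<phi> has_real_derivative 0) (at 0)"
    unfolding \<phi>_def using hf a by (auto intro!: derivative_eq_intros)
  moreover have "\<phi> 0 = 0" using hf(2) by (simp add: \<phi>_def)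
  moreover have "renyi_div \<alpha> A (s + t *\<^sub>R e) s = ereal (\<phi> t)" if t: "\<forall>j\<in>A. 0 < s$j + t*e$j" for t
  proof -
    have Ane: "A \<noteq> {}" using s1 by auto
    have "0 < h t" unfolding h_def
    proof (rule sum_pos)
      fix j assume "j \<in> A"
      thus "0 < (s$j + t*e$j) powr \<alpha> * (s$j) powr (1 - \<alpha>)"
        using t spos[of j] by (intro mult_pos_pos) auto
    qed (use Ane in auto)
    thus ?thesis by (simp add: renyi_div_def \<phi>_def h_def Let_def)
  qed
  ultimately show ?thesis by (intro exI[of _ \<phi>]) auto
qed

lemma rkl_case:
  fixes s e :: "real^'m::finite"
  assumes spos: "\<And>j. j \<in> A \<Longrightarrow> 0 < s$j"
    and e0: "(\<Sum>j\<in>A. e$j) = 0"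
  shows "\<exists>\<phi>. (\<phi> has_real_derivative 0) (at 0) \<and> \<phi> 0 = 0 \<and>
     (\<forall>t. (\<forall>j\<in>A. 0 < s$j + t*e$j) \<longrightarrow> rev_kl A (s + t *\<^sub>R e) s = ereal (\<phi> t))"
proof -
  define \<phi> where "\<phi> t = (\<Sum>j\<in>A. s$j * (ln (s$j) - ln (s$j + t*e$j)))" for t
  have "(\<phi> has_real_derivative (\<Sum>j\<in>A. s$j * (0 - e$j * inverse (s$j)))) (at 0)"
    unfolding \<phi>_def using spos by (auto intro!: derivative_eq_intros sum.cong)
  moreover have "(\<Sum>j\<in>A. s$j * (0 - e$j * inverse (s$j))) = (\<Sum>j\<in>A. - e$j)"
    by (rule sum.cong) (auto simp: spos less_imp_neq[symmetric] field_simps dest: spos)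
  moreover have "(\<Sum>j\<in>A. - e$j) = 0" using e0 by (simp add: sum_negf)
  moreover have "\<phi> 0 = 0" by (simp add: \<phi>_def)
  moreover have "rev_kl A (s + t *\<^sub>R e) s = ereal (\<phi> t)" if t: "\<forall>j\<in>A. 0 < s$j + t*e$j" for t
  proof -
    have "(\<Sum>j\<in>A. s$j * ln (s$j / (s + t *\<^sub>R e)$j)) = \<phi> t"
      unfolding \<phi>_def by (rule sum.cong) (use t spos in \<open>auto simp: ln_div\<close>)
    thus ?thesis using t by (simp add: rev_kl_def)
  qed
  ultimately show ?thesis by (intro exI[of _ \<phi>]) auto
qed

lemma G_local:
  fixes s e :: "real^'m::finite"
  assumes G_choice: "(\<exists>\<alpha>. 0 < \<alpha> \<and> \<alpha> < 1 \<and> (G = alpha_div \<alpha> \<or> G = renyi_div \<alpha>)) \<or> G = rev_kl"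
    and spos: "\<And>j. j \<in> A \<Longrightarrow> 0 < s$j"
    and s1: "(\<Sum>j\<in>A. s$j) = 1" and e0: "(\<Sum>j\<in>A. e$j) = 0"
  shows "\<exists>\<phi>. (\<phi> has_real_derivative 0) (at 0) \<and> \<phi> 0 = 0 \<and>
     (\<forall>t. (\<forall>j\<in>A. 0 < s$j + t*e$j) \<longrightarrow> G A (s + t *\<^sub>R e) s = ereal (\<phi> t))"
  using G_choice alpha_case[OF _ _ spos s1 e0] renyi_case[OF _ _ spos s1 e0] rkl_case[OF spos e0]
  by blast

theorem lemma17:
  fixes A :: "'n::finite \<Rightarrow> 'm::finite set"
    and v :: "'n \<Rightarrow> real^'m^'n \<Rightarrow> real"
    and G :: "'m set \<Rightarrow> real^'m \<Rightarrow> real^'m \<Rightarrow> ereal"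
    and \<mu> :: real and \<sigma> :: "real^'m^'n"
  assumes diff: "\<And>i \<pi>. \<pi> \<in> profiles A \<Longrightarrow> v i differentiable (at \<pi>)"
    and mono: "monotone_game A v"
    and G_choice: "(\<exists>\<alpha>. 0 < \<alpha> \<and> \<alpha> < 1 \<and> (G = alpha_div \<alpha> \<or> G = renyi_div \<alpha>)) \<or> G = rev_kl"
    and mu_pos: "\<mu> > 0"
    and sigma_prof: "\<sigma> \<in> profiles A"
    and sigma_int: "\<And>i j. j \<in> A i \<Longrightarrow> 0 < \<sigma>$i$j"
    and fixed: "perturbed_eq A v G \<mu> \<sigma> \<sigma>"
  shows "nash_eq A v \<sigma>"
  unfolding nash_eq_def
proof (intro conjI allI ballI sigma_prof)
  fix i p assume p: "p \<in> prob_simplex (A i)"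
  define s where "s = \<sigma>$i"
  define e where "e = p - s"
  define E where "E = upd0 i e"
  define \<pi> where "\<pi> t = \<sigma> + t *\<^sub>R E" for t
  define g where "g t = v i (\<pi> t)" for t
  define L where "L t = frechet_derivative (v i) (at (\<pi> t)) E" for t
  have sS: "s \<in> prob_simplex (A i)" using sigma_prof by (simp add: profiles_def s_def)
  have upd_pi: "upd \<sigma> i (s + t *\<^sub>R e) = \<pi> t" for t
    by (auto simp: upd_def \<pi>_def E_def upd0_def vec_eq_iff s_def)
  have qS: "s + t *\<^sub>R e \<in> prob_simplex (A i)" if "0 \<le> t" "t \<le> 1" for t
  proof -
    have eq: "s + t *\<^sub>R e = (1 - t) *\<^sub>R s + t *\<^sub>R p" by (simp add: e_def algebra_simps)
    have "(\<Sum>j\<in>A i. (1 - t) * s$j + t * p$j) = (1 - t) * (\<Sum>j\<in>A i. s$j) + t * (\<Sum>j\<in>A i. p$j)"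
      by (simp add: sum.distrib sum_distrib_left)
    also have "\<dots> = 1" using sS p by (simp add: prob_simplex_def)
    finally show ?thesis using sS p that unfolding eq prob_simplex_def by auto
  qed
  have piP: "\<pi> t \<in> profiles A" if "0 \<le> t" "t \<le> 1" for t
  proof -
    have "\<pi> t = upd \<sigma> i (s + t *\<^sub>R e)" by (simp add: upd_pi)
    thus ?thesis using qS[OF that] sigma_prof by (auto simp: profiles_def upd_def)
  qed
  have pi0: "\<pi> 0 = \<sigma>" by (simp add: \<pi>_def)
  have pi1: "\<pi> 1 = upd \<sigma> i p" using upd_pi[of 1] by (simp add: e_def)
  have gder: "(g has_real_derivative L t) (at t)" if "0 \<le> t" "t \<le> 1" for t
  proof -
    let ?D = "frechet_derivative (v i) (at (\<pi> t))"
    have D: "(v i has_derivative ?D) (at (\<pi> t))"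
      using diff[OF piP[OF that]] frechet_derivative_works by blast
    have P: "(\<pi> has_derivative (\<lambda>h. h *\<^sub>R E)) (at t)"
      unfolding \<pi>_def[abs_def] by (auto intro!: derivative_eq_intros)
    have "(g has_derivative (\<lambda>h. ?D (h *\<^sub>R E))) (at t)"
      using diff_chain_at[OF P D] by (simp add: g_def[abs_def] o_def)
    moreover have "(\<lambda>h. ?D (h *\<^sub>R E)) = (*) (L t)"
      using linear_scale[OF has_derivative_linear[OF D]] by (auto simp: L_def fun_eq_iff)
    ultimately show ?thesis by (simp add: has_field_derivative_def)
  qed
  have bgL: "block_grad v i (\<pi> t) \<bullet> e = L t" if "0 \<le> t" "t \<le> 1" for t
    using bg_inner[OF diff[OF piP[OF that]]] by (simp add: L_def E_def)
  have e0: "(\<Sum>j\<in>A i. e$j) = 0"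
    using sS p by (simp add: e_def prob_simplex_def sum_subtractf)
  have spos: "\<And>j. j \<in> A i \<Longrightarrow> 0 < s$j" using sigma_int by (simp add: s_def)
  have s1: "(\<Sum>j\<in>A i. s$j) = 1" using sS by (simp add: prob_simplex_def)
  obtain \<phi> where phid: "(\<phi> has_real_derivative 0) (at 0)" and phi0: "\<phi> 0 = 0"
    and phiG: "\<And>t. (\<forall>j\<in>A i. 0 < s$j + t*e$j) \<Longrightarrow> G (A i) (s + t *\<^sub>R e) s = ereal (\<phi> t)"
    using G_local[OF G_choice spos s1 e0] by blast
  have Gss: "G (A i) s s = ereal 0"
    using phiG[of 0] phi0 spos by simp
  have ineq: "g t - \<mu> * \<phi> t \<le> g 0 - \<mu> * \<phi> 0" if "0 < t" "t < 1" for t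
  proof -
    have pos: "\<forall>j\<in>A i. 0 < s$j + t*e$j"
    proof
      fix j assume j: "j \<in> A i"
      have "0 \<le> p$j" using p by (simp add: prob_simplex_def)
      moreover have "s$j + t*e$j = (1 - t) * s$j + t * p$j" by (simp add: e_def algebra_simps)
      ultimately show "0 < s$j + t*e$j" using spos[OF j] that
        by (smt (verit) mult_nonneg_nonneg mult_pos_pos)
    qed
    have "ereal (v i (upd \<sigma> i (s + t *\<^sub>R e))) - ereal \<mu> * G (A i) (s + t *\<^sub>R e) (\<sigma>$i)
          \<le> ereal (v i \<sigma>) - ereal \<mu> * G (A i) (\<sigma>$i) (\<sigma>$i)"
      using fixed qS[of t] that unfolding perturbed_eq_def by auto
    hence "ereal (g t) - ereal \<mu> * ereal (\<phi> t) \<le> ereal (g 0) - ereal \<mu> * ereal 0"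
      using phiG[OF pos] Gss by (simp add: upd_pi g_def pi0 s_def[symmetric])
    thus ?thesis using phi0 by simp
  qed
  have L0: "L 0 \<le> 0"
  proof (rule ccontr)
    assume "\<not> L 0 \<le> 0"
    hence Lp: "0 < L 0 - \<mu> * 0" by simp
    have "((\<lambda>t. g t - \<mu> * \<phi> t) has_real_derivative L 0 - \<mu> * 0) (at 0)"
      using gder[of 0] phid by (auto intro!: derivative_eq_intros)
    from DERIV_pos_inc_right[OF this Lp] obtain d where d: "d > 0"
      and dd: "\<And>h. h > 0 \<Longrightarrow> h < d \<Longrightarrow> g 0 - \<mu> * \<phi> 0 < g (0 + h) - \<mu> * \<phi> (0 + h)" by blast
    define h where "h = min (d/2) (1/2)"
    have "g 0 - \<mu> * \<phi> 0 < g h - \<mu> * \<phi> h" using dd[of h] d by (simp add: h_def)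
    moreover have "g h - \<mu> * \<phi> h \<le> g 0 - \<mu> * \<phi> 0" using ineq[of h] d by (simp add: h_def)
    ultimately show False by simp
  qed
  have Lt: "L t \<le> 0" if "0 \<le> t" "t \<le> 1" for t
  proof (cases "t = 0")
    case True thus ?thesis using L0 by simp
  next
    case False
    hence tp: "0 < t" using that by simp
    have "(\<Sum>k\<in>UNIV. (block_grad v k (\<pi> t) - block_grad v k (\<pi> 0)) \<bullet> (\<pi> t$k - \<pi> 0$k)) \<le> 0"
      using mono piP[OF that] piP[of 0] unfolding monotone_game_def by auto
    moreover have "(\<Sum>k\<in>UNIV. (block_grad v k (\<pi> t) - block_grad v k (\<pi> 0)) \<bullet> (\<pi> t$k - \<pi> 0$k))
        = (\<Sum>k\<in>UNIV. if k = i then (block_grad v i (\<pi> t) - block_grad v i (\<pi> 0)) \<bullet> (t *\<^sub>R e) else 0)"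
      by (rule sum.cong) (auto simp: \<pi>_def E_def upd0_def)
    moreover have "\<dots> = t * (L t - L 0)"
      using bgL[OF that] bgL[of 0] by (simp add: inner_diff_left algebra_simps)
    ultimately have "t * (L t - L 0) \<le> 0" by simp
    hence "L t \<le> L 0" using tp by (simp add: mult_le_0_iff)
    thus ?thesis using L0 by simp
  qed
  have "g 1 \<le> g 0"
    by (rule DERIV_nonpos_imp_nonincreasing[of 0 1 g]) (use gder Lt in auto)
  thus "v i (upd \<sigma> i p) \<le> v i \<sigma>" using pi0 pi1 by (simp add: g_def)
qed

end
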